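(* Let $\eta=\frac1{20}$ and for $a,b>0$ define $$U(a,b)=\eta\,\mathbb E_{x\sim\mathcal N(b,1)}\Big[\big(\tanh(ax)-\tfrac12\tanh''(ax)a^2+\tanh'(ax)ax\big)x\Big]-\eta\,\mathbb E_{x\sim\mathcal N(b,1)}[\tanh'(ax)a]-\eta a.$$ If $a\in[30,\tfrac43b]$, then $|U(a,b)|\le\frac{a+b}{10}$. *)

theory Defs
  imports "HOL-Probability.Probability"
begin

definition eta :: real where "eta = 1/20"

definition tanh1 :: "real \<Rightarrow> real" where "tanh1 = deriv (tanh :: real \<Rightarrow> real)"
definition tanh2 :: "real \<Rightarrow> real" where "tanh2 = deriv tanh1"

definition gauss_exp :: "real \<Rightarrow> (real \<Rightarrow> real) \<Rightarrow> real" where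
  "gauss_exp b f = (\<integral>x. normal_density b 1 x * f x \<partial>lborel)"

definition U :: "real \<Rightarrow> real \<Rightarrow> real" where
  "U a b = eta * gauss_exp b (\<lambda>x. (tanh (a*x) - 1/2 * tanh2 (a*x) * a^2 + tanh1 (a*x) * a * x) * x)
         - eta * gauss_exp b (\<lambda>x. tanh1 (a*x) * a)
         - eta * a"

end

theory Submission
  imports Defs
begin

lemma tanh1_eq: "tanh1 y = 1 - tanh y ^ 2"
proof -
  have "(tanh has_field_derivative 1 - tanh y ^ 2) (at y)"
    by (auto intro!: derivative_eq_intros simp: cosh_real_pos[THEN less_imp_neq, symmetric])
  thus ?thesis unfolding tanh1_def by (rule DERIV_imp_deriv)
qed

lemma tanh1_fun: "tanh1 = (\<lambda>y. 1 - tanh y ^ 2)"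
  using tanh1_eq by auto

lemma tanh2_eq: "tanh2 y = - 2 * tanh y * (1 - tanh y ^ 2)"
proof -
  have "((\<lambda>y. 1 - tanh y ^ 2) has_field_derivative - (2 * tanh y * (1 - tanh y ^ 2))) (at y)"
    by (auto intro!: derivative_eq_intros simp: cosh_real_pos[THEN less_imp_neq, symmetric])
  hence "deriv (\<lambda>y. 1 - tanh y ^ 2) y = - (2 * tanh y * (1 - tanh y ^ 2))" by (rule DERIV_imp_deriv)
  thus ?thesis unfolding tanh2_def tanh1_fun by simp
qed

lemma sinh_ge: "0 \<le> (y::real) \<Longrightarrow> 2 * y \<le> exp y - exp (-y)"
proof -
  assume y: "0 \<le> y"
  have "\<And>z. ((\<lambda>z. exp z - exp (-z) - 2*z) has_real_derivative (exp z + exp (-z) - 2)) (at z)"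
    by (auto intro!: derivative_eq_intros)
  moreover have "\<And>z. 0 \<le> exp z + exp (-z) - (2::real)"
  proof -
    fix z :: real
    have "(exp z - 1)^2 \<ge> 0" by simp
    hence "exp z * exp z + 1 \<ge> 2 * exp z" by (simp add: power2_eq_square algebra_simps)
    hence "exp z + 1 / exp z \<ge> 2" by (simp add: field_simps)
    thus "0 \<le> exp z + exp (-z) - (2::real)" by (simp add: exp_minus field_simps)
  qed
  ultimately have "exp 0 - exp (-0) - 2*0 \<le> exp y - exp (-y) - 2*(y::real)"
    using DERIV_nonneg_imp_nondecreasing[OF y, of "\<lambda>z. exp z - exp (-z) - 2*z"] by blast
  thus ?thesis by simp
qed

lemma poly1: "0 \<le> (w::real) \<Longrightarrow> 0 \<le> 7*w^4 - 40*w^3 + 54*w^2 + 40*w + 47"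
proof -
  assume w: "0 \<le> w"
  have "7*w^4 - 40*w^3 + 54*w^2 + 40*w + 47 = 7*(w^2 - 20/7*w - 1/4)^2 + (54 - 400/7 + 7/2)*w^2 + 30*w + (47 - 7/16)"
    by (simp add: algebra_simps power2_eq_square power3_eq_cube power4_eq_xxxx)
  also have "\<dots> \<ge> 0" using w by (intro add_nonneg_nonneg) auto
  finally show ?thesis .
qed

lemma poly2: "1 \<le> (w::real) \<Longrightarrow> 0 \<le> 9*w^6 - 40*w^5 + 27*w^4 + 80*w^3 + 27*w^2 - 40*w + 9"
proof -
  assume w: "1 \<le> w"
  have "w^3 \<ge> w" using w by (metis less_le_trans not_less one_le_power power_one_right power_increasing numeral_le_iff semiring_norm(69) one_le_numeral zero_less_one)
  have e: "9*w^6 - 40*w^5 + 27*w^4 + 80*w^3 + 27*w^2 - 40*w + 9 = 9*(w^3 - 20/9*w^2 - w)^2 + (27 - 400/9 + 18)*w^4 + 40*(w^3 - w) + 18*w^2 + 9"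
    by (simp add: algebra_simps power2_eq_square power3_eq_cube power4_eq_xxxx numeral_eq_Suc)
  show ?thesis unfolding e using \<open>w^3 \<ge> w\<close> by (intro add_nonneg_nonneg) auto
qed

lemma pos_bounds:
  fixes y :: real assumes y: "0 \<le> y"
  shows "0 \<le> tanh y + y * (1 - tanh y ^ 2) \<and> tanh y + y * (1 - tanh y ^ 2) \<le> 27/20"
    and "0 \<le> y * tanh y * (1 - tanh y ^ 2) \<and> y * tanh y * (1 - tanh y ^ 2) \<le> 9/20"
proof -
  define w where "w = exp y"
  have w1: "1 \<le> w" unfolding w_def using y by simp
  have wp: "0 < w" using w1 by simp
  have em: "exp (-y) = 1 / w" unfolding w_def by (simp add: exp_minus field_simps)
  have t: "tanh y = (w^2 - 1) / (w^2 + 1)"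
  proof -
    have d1: "w + w * (w * w) \<noteq> 0" using wp by (metis add_pos_pos mult_pos_pos less_irrefl)
    have d2: "1 + w * w \<noteq> 0" using wp by (metis add_pos_pos mult_pos_pos less_irrefl zero_less_one)
    show ?thesis
      unfolding tanh_altdef w_def[symmetric] em using wp d1 d2
      by (simp add: field_simps power2_eq_square)
  qed
  have s: "1 - tanh y ^ 2 = 4 * w^2 / (w^2 + 1)^2"
  proof -
    have d: "w^2 + 1 \<noteq> 0" by (metis add_pos_nonneg zero_le_power2 zero_less_one less_irrefl add.commute)
    have "1 - ((w^2 - 1) / (w^2 + 1))^2 = ((w^2+1)^2 - (w^2-1)^2) / (w^2+1)^2"
      using d by (simp only: power_divide) (simp add: divide_simps)
    also have "(w^2+1)^2 - (w^2-1)^2 = 4 * w^2" by (simp add: algebra_simps power2_eq_square)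
    finally show ?thesis unfolding t .
  qed
  have Y: "y \<le> (w^2 - 1) / (2 * w)"
    using sinh_ge[OF y] unfolding w_def[symmetric] em using wp by (simp add: field_simps power2_eq_square)
  have t0: "0 \<le> tanh y" using y by simp
  have D: "w^2+1 > 0" by (metis add_pos_nonneg zero_le_power2 zero_less_one add.commute)
  hence D': "w^2+1 \<noteq> 0" by simp
  have s0: "0 \<le> 1 - tanh y ^ 2" unfolding s by simp
  have "tanh y + y * (1 - tanh y ^ 2) \<le> tanh y + (w^2 - 1) / (2 * w) * (1 - tanh y ^ 2)"
    using Y s0 by (intro add_left_mono mult_right_mono) auto
  also have "\<dots> = ((w^2-1)*(w^2+1) + 2*w*(w^2-1)) / (w^2+1)^2"
    unfolding t s using wp D' by (simp add: divide_simps) (simp add: algebra_simps power2_eq_square)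
  also have "\<dots> \<le> 27/20"
  proof -
    have "0 \<le> 7*w^4 - 40*w^3 + 54*w^2 + 40*w + 47" using poly1 wp by simp
    hence "(w^2-1)*(w^2+1) + 2*w*(w^2-1) \<le> 27/20 * (w^2+1)^2"
      by (simp add: algebra_simps power2_eq_square power3_eq_cube power4_eq_xxxx)
    thus ?thesis using D by (simp add: pos_divide_le_eq)
  qed
  finally show "0 \<le> tanh y + y * (1 - tanh y ^ 2) \<and> tanh y + y * (1 - tanh y ^ 2) \<le> 27/20"
    using t0 s0 y by simp
  have "y * tanh y * (1 - tanh y ^ 2) \<le> (w^2 - 1) / (2 * w) * tanh y * (1 - tanh y ^ 2)"
    using Y s0 t0 by (intro mult_right_mono) auto
  also have "\<dots> = (2*w*(w^2-1)^2) / (w^2+1)^3"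
    unfolding t s using wp D' by (simp add: divide_simps) (simp add: algebra_simps power2_eq_square power3_eq_cube)
  also have "\<dots> \<le> 9/20"
  proof -
    have "0 \<le> 9*w^6 - 40*w^5 + 27*w^4 + 80*w^3 + 27*w^2 - 40*w + 9" using poly2 w1 by simp
    hence "2*w*(w^2-1)^2 \<le> 9/20 * (w^2+1)^3"
      by (simp add: algebra_simps power2_eq_square power3_eq_cube power4_eq_xxxx numeral_eq_Suc)
    thus ?thesis using D by (simp add: pos_divide_le_eq)
  qed
  finally show "0 \<le> y * tanh y * (1 - tanh y ^ 2) \<and> y * tanh y * (1 - tanh y ^ 2) \<le> 9/20"
    using t0 s0 y by simp
qed

lemma all_bounds:
  fixes y :: real
  shows "\<bar>tanh y + y * (1 - tanh y ^ 2)\<bar> \<le> 27/20"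
    and "\<bar>y * tanh y * (1 - tanh y ^ 2)\<bar> \<le> 9/20"
proof -
  have "\<bar>tanh y + y * (1 - tanh y ^ 2)\<bar> = tanh \<bar>y\<bar> + \<bar>y\<bar> * (1 - tanh \<bar>y\<bar> ^ 2)"
    by (cases "y \<ge> 0") (use pos_bounds(1)[of y] pos_bounds(1)[of "-y"] in auto)
  thus "\<bar>tanh y + y * (1 - tanh y ^ 2)\<bar> \<le> 27/20" using pos_bounds(1)[of "\<bar>y\<bar>"] by simp
  have "\<bar>y * tanh y * (1 - tanh y ^ 2)\<bar> = \<bar>y\<bar> * tanh \<bar>y\<bar> * (1 - tanh \<bar>y\<bar> ^ 2)"
    by (cases "y \<ge> 0") (use pos_bounds(2)[of y] pos_bounds(2)[of "-y"] in auto)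
  thus "\<bar>y * tanh y * (1 - tanh y ^ 2)\<bar> \<le> 9/20" using pos_bounds(2)[of "\<bar>y\<bar>"] by simp
qed

lemma int_bound:
  fixes f g :: "real \<Rightarrow> real"
  assumes "integrable lborel g" "\<And>x. \<bar>f x\<bar> \<le> g x"
  shows "\<bar>integral\<^sup>L lborel f\<bar> \<le> integral\<^sup>L lborel g"
proof (cases "integrable lborel f")
  case True
  thus ?thesis using assms by (intro integral_abs_bound_integral) auto
next
  case False
  hence "integral\<^sup>L lborel f = 0" by (rule not_integrable_integral_eq)
  moreover have "0 \<le> integral\<^sup>L lborel g" using assms(2) by (intro integral_nonneg_AE AE_I2) (meson abs_ge_zero order_trans)
  ultimately show ?thesis by simp
qed

lemma tanh1_bounds: "0 \<le> tanh1 y \<and> tanh1 y \<le> 1"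
proof -
  have "\<bar>tanh y\<bar> \<le> 1" using tanh_real_bounds[of y] by auto
  hence "tanh y ^ 2 \<le> 1" by (simp add: abs_square_le_1)
  thus ?thesis unfolding tanh1_eq by simp
qed

theorem lemmaF4:
  fixes a b :: real
  assumes "a > 0" and "b > 0" and "30 \<le> a" and "a \<le> 4/3 * b"
  shows "\<bar>U a b\<bar> \<le> (a + b) / 10"
proof -
  let ?nd = "normal_density b 1"
  define A where "A = gauss_exp b (\<lambda>x. (tanh (a*x) - 1/2 * tanh2 (a*x) * a^2 + tanh1 (a*x) * a * x) * x)"
  define B where "B = gauss_exp b (\<lambda>x. tanh1 (a*x) * a)"
  have UAB: "U a b = eta * A - eta * B - eta * a" unfolding U_def A_def B_def ..
  define g where "g = (\<lambda>x. 27/(40*b) * (?nd x * (x - b)^2) + 27/20 * (?nd x * x) + 9/20 * a * ?nd x)"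
  have m2: "integral\<^sup>L lborel (\<lambda>x. ?nd x * (x - b)^2) = 1"
    using integral_normal_moment_even[where k=1 and \<sigma>=1 and \<mu>=b] by simp
  have i2: "integrable lborel (\<lambda>x. ?nd x * (x - b)^2)"
    using integrable_normal_moment[where k=2 and \<sigma>=1 and \<mu>=b] by simp
  have m1: "integral\<^sup>L lborel (\<lambda>x. ?nd x * x) = b"
    using integral_normal_moment_nz_1[where \<sigma>=1 and \<mu>=b] by simp
  have i1: "integrable lborel (\<lambda>x. ?nd x * x)"
    using integrable_normal_moment_nz_1[where \<sigma>=1 and \<mu>=b] by simp
  have i0: "integrable lborel ?nd" by simp
  have gi: "integrable lborel g" unfolding g_def using i0 i1 i2 by auto
  have gint: "integral\<^sup>L lborel g = 27/(40*b) + 27/20 * b + 9/20 * a"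
    unfolding g_def using i0 i1 i2 m1 m2 by simp
  have Abound: "\<bar>A\<bar> \<le> 27/(40*b) + 27/20 * b + 9/20 * a"
    unfolding A_def gauss_exp_def gint[symmetric]
  proof (rule int_bound[OF gi])
    fix x :: real
    define y where "y = a * x"
    define t where "t = tanh y"
    have F: "(tanh (a*x) - 1/2 * tanh2 (a*x) * a^2 + tanh1 (a*x) * a * x) * x
        = (t + y * (1 - t^2)) * x + a * (y * t * (1 - t^2))"
      unfolding tanh1_eq tanh2_eq t_def y_def by (simp add: algebra_simps power2_eq_square)
    have "\<bar>(t + y * (1 - t^2)) * x + a * (y * t * (1 - t^2))\<bar> \<le> 27/20 * \<bar>x\<bar> + a * (9/20)"
    proof -
      have "\<bar>(t + y * (1 - t^2)) * x\<bar> \<le> 27/20 * \<bar>x\<bar>"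
        unfolding abs_mult t_def using all_bounds(1)[of y] by (intro mult_right_mono) auto
      moreover have "\<bar>a * (y * t * (1 - t^2))\<bar> \<le> a * (9/20)"
      proof -
        have "\<bar>a * (y * t * (1 - t^2))\<bar> = a * \<bar>y * t * (1 - t^2)\<bar>" using assms(1) by (simp add: abs_mult)
        also have "\<dots> \<le> a * (9/20)" unfolding t_def using all_bounds(2)[of y] assms(1) by (intro mult_left_mono) auto
        finally show ?thesis .
      qed
      ultimately show ?thesis by (smt (verit) abs_triangle_ineq)
    qed
    also have "\<dots> \<le> 27/20 * (((x - b)^2 + 2*b*x) / (2*b)) + 9/20 * a"
    proof -
      have "2*b*\<bar>x\<bar> \<le> (x - b)^2 + 2*b*x"
      proof -
        have "0 \<le> (\<bar>x\<bar> - b)^2" by simp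
        hence "2*b*\<bar>x\<bar> \<le> x^2 + b^2" by (simp add: power2_eq_square algebra_simps)
        thus ?thesis by (simp add: power2_eq_square algebra_simps)
      qed
      hence "\<bar>x\<bar> \<le> ((x - b)^2 + 2*b*x) / (2*b)" using assms(2) by (simp add: pos_le_divide_eq mult.commute)
      thus ?thesis by linarith
    qed
    finally have "\<bar>(tanh (a*x) - 1/2 * tanh2 (a*x) * a^2 + tanh1 (a*x) * a * x) * x\<bar>
         \<le> 27/20 * (((x - b)^2 + 2*b*x) / (2*b)) + 9/20 * a" unfolding F .
    hence "\<bar>?nd x * ((tanh (a*x) - 1/2 * tanh2 (a*x) * a^2 + tanh1 (a*x) * a * x) * x)\<bar>
         \<le> ?nd x * (27/20 * (((x - b)^2 + 2*b*x) / (2*b)) + 9/20 * a)"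
    proof -
      let ?F = "(tanh (a*x) - 1/2 * tanh2 (a*x) * a^2 + tanh1 (a*x) * a * x) * x"
      have "\<bar>?nd x * ?F\<bar> = ?nd x * \<bar>?F\<bar>" by (simp add: abs_mult)
      thus ?thesis using \<open>\<bar>?F\<bar> \<le> _\<close> by (metis mult_left_mono normal_density_nonneg)
    qed
    also have "\<dots> = g x" unfolding g_def using assms(2) by (simp add: field_simps)
    finally show "\<bar>?nd x * ((tanh (a*x) - 1/2 * tanh2 (a*x) * a^2 + tanh1 (a*x) * a * x) * x)\<bar> \<le> g x" .
  qed
  have B0: "0 \<le> B" unfolding B_def gauss_exp_def
    using tanh1_bounds assms(1) by (intro integral_nonneg_AE AE_I2) auto
  have B1: "B \<le> a"
  proof -
    have "\<bar>B\<bar> \<le> integral\<^sup>L lborel (\<lambda>x. a * ?nd x)" unfolding B_def gauss_exp_def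
    proof (rule int_bound)
      show "integrable lborel (\<lambda>x. a * ?nd x)" by simp
      fix x
      show "\<bar>?nd x * (tanh1 (a * x) * a)\<bar> \<le> a * ?nd x"
        using mult_left_le[of "tanh1 (a*x)" "a * ?nd x"] tanh1_bounds[of "a*x"] assms(1) by (simp add: abs_mult mult_ac)
    qed
    thus ?thesis by simp
  qed
  have bb: "27/(40*b) \<le> b/20"
  proof -
    have "b \<ge> 22" using assms by simp
    hence "b*b \<ge> 22*22" by (intro mult_mono) auto
    thus ?thesis using assms(2) by (simp add: field_simps)
  qed
  have h1: "\<bar>A - B - a\<bar> \<le> 2 * (a + b)" using Abound B0 B1 bb assms by (simp add: abs_le_iff)
  have h2: "U a b = (A - B - a) / 20" unfolding UAB eta_def by simp
  have "\<bar>U a b\<bar> = \<bar>A - B - a\<bar> / 20" unfolding h2 by simp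
  also have "\<dots> \<le> 2 * (a + b) / 20" using h1 by (intro divide_right_mono) auto
  finally show ?thesis by simp
qed

end
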